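(* (Strong Parity Theorem.) Let $\mathcal U\in\mathcal L(\mathcal A_{\mathsf P})$ be a subspace whose defining move equations involve $\kappa$ pieces, and suppose the quasipolynomial $\alpha(\mathcal U;n)$ has period $p$. Then the number of values of $\alpha(\mathcal U;n)$ that are sufficient to determine all the coefficients in all constituents of $\alpha(\mathcal U;n)$ is $\lceil p(\kappa-\tfrac12\operatorname{codim}\mathcal U)\rceil+\epsilon$, where $\epsilon=1$ if $\operatorname{codim}\mathcal U$ is even and $\epsilon=0$ if it is odd.
   Context: A rider piece $\mathsf P$ has a finite set $\mathcal M$ of basic moves: nonzero integer vectors $m=(c,d)$ with $\gcd(c,d)=1$, no two parallel. For $q$ pieces, configurations are points $(z_1,\dots,z_q)\in\mathbb R^{2q}$, $z_i=(x_i,y_i)$. The move arrangement $\mathcal A_{\mathsf P}$ consists of the hyperplanes $\mathcal H^{d/c}_{ij}=\{(z_1,\dots,z_q):(z_j-z_i)\cdot(d,-c)=0\}$ for $i<j$ and $(c,d)\in\mathcal M$; $\mathcal L(\mathcal A_{\mathsf P})$ is the set of intersections of subsets of these hyperplanes. For $\mathcal U\in\mathcal L(\mathcal A_{\mathsf P})$ involving a set of $\kappa$ pieces, its essential part $\tilde{\mathcal U}\subseteq\mathbb R^{2\kappa}$ is the subspace defined by the same move equations in the coordinates of those $\kappa$ pieces, and $\alpha(\mathcal U;n)$ is the number of integral points in $(n+1)\cdot\big((0,1)^{2\kappa}\cap\tilde{\mathcal U}\big)$. It is known (Ehrhart theory) that $\alpha(\mathcal U;n)$ is a quasipolynomial in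 $n$ of degree $d=2\kappa-\operatorname{codim}\mathcal U$ whose leading coefficient is the same known constant for all constituents, and (parity/reciprocity) that its constituents $\alpha_0,\dots,\alpha_{p-1}$ (with $\alpha(n)=\alpha_{n\bmod p}(n)$, indices mod $p$) satisfy $\alpha_{-i}(-n)=(-1)^d\alpha_i(n)$. *)

theory Defs
  imports "HOL-Analysis.Analysis" "HOL-Computational_Algebra.Polynomial"
begin

definition rider_moves :: "(int \<times> int) set \<Rightarrow> bool" where
  "rider_moves M \<longleftrightarrow> finite M \<and>
     (\<forall>(c,d)\<in>M. (c,d) \<noteq> (0,0) \<and> gcd c d = 1) \<and>
     (\<forall>(c,d)\<in>M. \<forall>(c',d')\<in>M. (c,d) \<noteq> (c',d') \<longrightarrow> c * d' \<noteq> d * c')"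

text \<open>Labels (i,j,m) of the hyperplanes of the move arrangement; pieces are indexed by the
  finite type 'q (q = CARD('q)). H_ij^m = H_ji^m, so i \<noteq> j is used instead of i < j.\<close>
definition move_labels :: "(int \<times> int) set \<Rightarrow> ('q \<times> 'q \<times> (int \<times> int)) set" where
  "move_labels M = {(i,j,m). i \<noteq> j \<and> m \<in> M}"

definition move_eq :: "(real \<times> real) \<Rightarrow> (real \<times> real) \<Rightarrow> int \<times> int \<Rightarrow> bool" where
  "move_eq zi zj m \<longleftrightarrow>
     (fst zj - fst zi) * of_int (snd m) - (snd zj - snd zi) * of_int (fst m) = 0"

text \<open>The intersection subspace U of the hyperplanes labelled by E (an element of L(A_P)),
  configurations being points of (R^2)^q.\<close>
definition subsp :: "('q::finite \<times> 'q \<times> (int \<times> int)) set \<Rightarrow> ((real \<times> real) ^ 'q) set" where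
  "subsp E = {z. \<forall>(i,j,m)\<in>E. move_eq (z $ i) (z $ j) m}"

definition codim :: "('q::finite \<times> 'q \<times> (int \<times> int)) set \<Rightarrow> nat" where
  "codim E = 2 * CARD('q) - dim (subsp E)"

definition pieces :: "('q \<times> 'q \<times> (int \<times> int)) set \<Rightarrow> 'q set" where
  "pieces E = {k. \<exists>(i,j,m)\<in>E. k = i \<or> k = j}"

text \<open>Essential part: the same move equations in the coordinates of the involved pieces,
  as a subset of (R^2)^kappa (functions on the involved pieces).\<close>
definition ess :: "('q \<times> 'q \<times> (int \<times> int)) set \<Rightarrow> ('q \<Rightarrow> real \<times> real) set" where
  "ess E = {z \<in> pieces E \<rightarrow>\<^sub>E UNIV. \<forall>(i,j,m)\<in>E. move_eq (z i) (z j) m}"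

definition open_cube :: "'q set \<Rightarrow> ('q \<Rightarrow> real \<times> real) set" where
  "open_cube K = {z \<in> K \<rightarrow>\<^sub>E UNIV.
      \<forall>k\<in>K. 0 < fst (z k) \<and> fst (z k) < 1 \<and> 0 < snd (z k) \<and> snd (z k) < 1}"

definition dilate :: "'q set \<Rightarrow> real \<Rightarrow> ('q \<Rightarrow> real \<times> real) \<Rightarrow> ('q \<Rightarrow> real \<times> real)" where
  "dilate K t z = restrict (\<lambda>k. t *\<^sub>R z k) K"

definition alpha :: "('q \<times> 'q \<times> (int \<times> int)) set \<Rightarrow> nat \<Rightarrow> nat" where
  "alpha E n = card {z \<in> dilate (pieces E) (real n + 1) ` (open_cube (pieces E) \<inter> ess E).
       \<forall>k\<in>pieces E. fst (z k) \<in> \<int> \<and> snd (z k) \<in> \<int>}"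

text \<open>A family of constituents c_0..c_{p-1} of degree d with common leading coefficient L
  satisfying the reciprocity/parity relation c_{-i}(-x) = (-1)^d c_i(x).\<close>
definition parity_constituents :: "nat \<Rightarrow> nat \<Rightarrow> real \<Rightarrow> (nat \<Rightarrow> real poly) \<Rightarrow> bool" where
  "parity_constituents p d L c \<longleftrightarrow>
     (\<forall>i<p. degree (c i) = d \<and> lead_coeff (c i) = L) \<and>
     (\<forall>i<p. \<forall>x. poly (c ((p - i) mod p)) (- x) = (-1) ^ d * poly (c i) x)"

end

theory Submission
  imports Defs
begin

lemma roots_zero:
  fixes D :: "real poly"
  assumes "S \<subseteq> {x. poly D x = 0}" "finite S" "card S \<ge> d" "D \<noteq> 0 \<Longrightarrow> degree D < d"
  shows "D = 0"
proof (rule ccontr)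
  assume "D \<noteq> 0"
  then have "card S \<le> card {x. poly D x = 0}"
    using assms(1) by (intro card_mono poly_roots_finite)
  also have "\<dots> \<le> degree D" using \<open>D \<noteq> 0\<close> by (rule card_poly_roots_bound)
  finally show False using assms \<open>D \<noteq> 0\<close> by linarith
qed

lemma mod_neg_idx: "i < (p::nat) \<Longrightarrow> (p - (p - i) mod p) mod p = i"
  by (cases "i = 0") auto

lemma core:
  fixes D :: "nat \<Rightarrow> real poly" and p d N i :: nat
  assumes p: "p > 0" and i: "i < p"
    and deg: "D i \<noteq> 0 \<Longrightarrow> degree (D i) < d"
    and Z: "\<And>n. 1 \<le> n \<Longrightarrow> n \<le> N \<Longrightarrow> poly (D (n mod p)) (real n) = 0"
    and P: "\<And>i x. i < p \<Longrightarrow> poly (D ((p - i) mod p)) (- x) = (-1) ^ d * poly (D i) x"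
    and bound: "p * d \<le> 2 * N"
  shows "D i = 0"
proof -
  obtain k e where de: "d = 2 * k + e" and e: "e < 2"
    by (metis mod_less_divisor mult_div_mod_eq zero_less_numeral)
  define r where "r = (if i = 0 then p else i)"
  define j where "j = (if i = 0 then p else p - i)"
  have r1: "1 \<le> r" "r \<le> p" "r mod p = i" using p i by (auto simp: r_def)
  have j1: "1 \<le> j" "j \<le> p" "j mod p = (p - i) mod p" using p i by (auto simp: j_def)
  have pk: "p * k \<le> N" using bound de by (simp add: algebra_simps)
  have negroot: "poly (D i) (- real m) = 0" if "1 \<le> m" "m \<le> N" "m mod p = (p - i) mod p" for m
  proof -
    have "poly (D ((p - m mod p) mod p)) (- real m) = (-1) ^ d * poly (D (m mod p)) (real m)"
      using P[of "m mod p" "real m"] p by simp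
    also have "\<dots> = 0" using Z[of m] that by simp
    finally show ?thesis using that mod_neg_idx[OF i] by simp
  qed
  define T1 where "T1 = (\<lambda>t. real (r + p * t)) ` {..<k}"
  define T2 where "T2 = (\<lambda>t. - real (j + p * t)) ` {..<k}"
  define X where "X = (if e = 0 then {} else if i = 0 then {0}
      else if 2 * i \<le> p then {real (i + p * k)} else {- real (p - i + p * k)})"
  have le: "r + p * t \<le> N" "j + p * t \<le> N" if "t < k" for t
  proof -
    have "p * t + p \<le> p * k" using that by (metis add.commute mult_Suc_right mult_le_mono2 Suc_leI)
    then show "r + p * t \<le> N" "j + p * t \<le> N" using r1 j1 pk by linarith+
  qed
  have T1r: "T1 \<subseteq> {x. poly (D i) x = 0}"
  proof
    fix x assume "x \<in> T1"
    then obtain t where t: "t < k" "x = real (r + p * t)" by (auto simp: T1_def)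
    have "(r + p * t) mod p = i" using r1 by simp
    then show "x \<in> {x. poly (D i) x = 0}" using Z[of "r + p * t"] le[OF t(1)] r1 t by simp
  qed
  have T2r: "T2 \<subseteq> {x. poly (D i) x = 0}"
  proof
    fix x assume "x \<in> T2"
    then obtain t where t: "t < k" "x = - real (j + p * t)" by (auto simp: T2_def)
    have "(j + p * t) mod p = (p - i) mod p" using j1 by simp
    then show "x \<in> {x. poly (D i) x = 0}" using negroot[of "j + p * t"] le[OF t(1)] j1 t by simp
  qed
  have Xr: "X \<subseteq> {x. poly (D i) x = 0}"
  proof (cases "e = 0")
    case True then show ?thesis by (simp add: X_def)
  next
    case False
    then have e1: "e = 1" using e by simp
    then have odd: "odd d" using de by simp
    show ?thesis
    proof (cases "i = 0")
      case True
      have "poly (D 0) 0 = - poly (D 0) 0" using P[of 0 0] p odd by simp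
      then show ?thesis using True False by (simp add: X_def)
    next
      case i0: False
      show ?thesis
      proof (cases "2 * i \<le> p")
        case True
        have "2 * (i + p * k) \<le> p * d" using de e1 True by (simp add: algebra_simps)
        then have "i + p * k \<le> N" using bound by (metis le_trans mult_le_cancel1 zero_less_numeral nat_mult_le_cancel_disj)
        moreover have "(i + p * k) mod p = i" using i by simp
        ultimately show ?thesis using Z[of "i + p * k"] i0 True False by (simp add: X_def)
      next
        case nt: False
        have "2 * (p - i + p * k) \<le> p * d" using de e1 nt by (simp add: algebra_simps)
        then have "p - i + p * k \<le> N" using bound by (metis le_trans mult_le_cancel1 zero_less_numeral nat_mult_le_cancel_disj)
        moreover have "(p - i + p * k) mod p = (p - i) mod p" by simp
        ultimately show ?thesis using negroot[of "p - i + p * k"] i i0 nt False by (simp add: X_def)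
      qed
    qed
  qed
  have cT1: "card T1 = k" unfolding T1_def by (subst card_image) (use p in \<open>auto simp: inj_on_def\<close>)
  have cT2: "card T2 = k" unfolding T2_def by (subst card_image) (use p in \<open>auto simp: inj_on_def\<close>)
  have cX: "card X = e" using e by (auto simp: X_def)
  have T1p: "T1 \<subseteq> {x. x > 0}" using r1 by (auto simp: T1_def simp del: of_nat_add of_nat_mult)
  have T2n: "T2 \<subseteq> {x. x < 0}" using j1 by (auto simp: T2_def simp del: of_nat_add of_nat_mult)
  have d12: "T1 \<inter> T2 = {}" using T1p T2n by fastforce
  have d3: "(T1 \<union> T2) \<inter> X = {}"
  proof (cases "e = 0")
    case True then show ?thesis by (simp add: X_def)
  next
    case e0: False
    show ?thesis
    proof (cases "i = 0")
      case True then show ?thesis using e0 T1p T2n by (auto simp: X_def)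
    next
      case i0: False
      show ?thesis
      proof (cases "2 * i \<le> p")
        case True
        have "real (i + p * k) \<notin> T1"
        proof
          assume "real (i + p * k) \<in> T1"
          then obtain t where "t < k" "i + p * k = r + p * t"
            by (auto simp: T1_def simp del: of_nat_add of_nat_mult)
          then show False using i0 p by (simp add: r_def)
        qed
        moreover have "real (i + p * k) \<notin> T2" using T2n of_nat_0_le_iff[of "i + p * k"] by (auto simp del: of_nat_add of_nat_mult)
        ultimately show ?thesis using e0 i0 True by (auto simp: X_def)
      next
        case nt: False
        have "- real (p - i + p * k) \<notin> T2"
        proof
          assume "- real (p - i + p * k) \<in> T2"
          then obtain t where "t < k" "p - i + p * k = j + p * t"
            by (auto simp: T2_def simp del: of_nat_add of_nat_mult)
          then show False using i0 p by (simp add: j_def)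
        qed
        moreover have "- real (p - i + p * k) \<notin> T1" using T1p of_nat_0_le_iff[of "p - i + p * k"] by (auto simp del: of_nat_add of_nat_mult of_nat_0_le_iff)
        ultimately show ?thesis using e0 i0 nt by (auto simp: X_def)
      qed
    qed
  qed
  have fin: "finite (T1 \<union> T2 \<union> X)" by (auto simp: T1_def T2_def X_def)
  have "card (T1 \<union> T2 \<union> X) = d"
    using d12 d3 cT1 cT2 cX de
    by (subst card_Un_disjoint) (auto simp: T1_def T2_def X_def card_Un_disjoint)
  then show ?thesis
    by (intro roots_zero[of "T1 \<union> T2 \<union> X" _ d] fin deg) (use T1r T2r Xr in auto)
qed

theorem theorem2p1:
  fixes M :: "(int \<times> int) set"
    and E :: "('q::finite \<times> 'q \<times> (int \<times> int)) set"
    and p :: nat and c :: "nat \<Rightarrow> real poly" and L :: real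
  assumes "rider_moves M"
    and "E \<subseteq> move_labels M"
    and "p > 0"
    and "\<forall>n. real (alpha E n) = poly (c (n mod p)) (real n)"
    and "parity_constituents p (2 * card (pieces E) - codim E) L c"
  shows "\<forall>c'. parity_constituents p (2 * card (pieces E) - codim E) L c' \<and>
           (\<forall>n\<in>{1 .. nat \<lceil>real p * (real (card (pieces E)) - real (codim E) / 2)\<rceil>
                        + (if even (codim E) then 1 else 0)}.
               poly (c' (n mod p)) (real n) = real (alpha E n))
           \<longrightarrow> (\<forall>i<p. c' i = c i)"
proof (rule allI, rule impI)
  fix c' assume H: "parity_constituents p (2 * card (pieces E) - codim E) L c' \<and>
           (\<forall>n\<in>{1 .. nat \<lceil>real p * (real (card (pieces E)) - real (codim E) / 2)\<rceil>
                        + (if even (codim E) then 1 else 0)}.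
               poly (c' (n mod p)) (real n) = real (alpha E n))"
  define d where "d = 2 * card (pieces E) - codim E"
  define N where "N = nat \<lceil>real p * (real (card (pieces E)) - real (codim E) / 2)\<rceil>
                        + (if even (codim E) then 1 else 0)"
  define D where "D = (\<lambda>i. c' i - c i)"
  have pc: "parity_constituents p d L c" using assms(5) by (simp add: d_def)
  have pc': "parity_constituents p d L c'" using H by (simp add: d_def)
  have ag: "\<And>n. 1 \<le> n \<Longrightarrow> n \<le> N \<Longrightarrow> poly (c' (n mod p)) (real n) = real (alpha E n)"
    using H by (simp add: N_def)
  have deg: "D i \<noteq> 0 \<Longrightarrow> degree (D i) < d" if i: "i < p" for i
  proof -
    assume nz: "D i \<noteq> 0"
    have dc: "degree (c i) = d" "lead_coeff (c i) = L" using pc i by (auto simp: parity_constituents_def)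
    have dc': "degree (c' i) = d" "lead_coeff (c' i) = L" using pc' i by (auto simp: parity_constituents_def)
    have co: "coeff (D i) n = 0" if "n \<ge> d" for n
    proof (cases "n = d")
      case True then show ?thesis using dc dc' by (simp add: D_def)
    next
      case False then have "n > d" using that by simp
      then show ?thesis using dc dc' by (simp add: D_def coeff_eq_0)
    qed
    show "degree (D i) < d"
    proof (rule ccontr)
      assume "\<not> degree (D i) < d"
      then have "coeff (D i) (degree (D i)) = 0" using co by simp
      then show False using nz by simp
    qed
  qed
  have Z: "poly (D (n mod p)) (real n) = 0" if "1 \<le> n" "n \<le> N" for n
    using ag[OF that] assms(4) by (simp add: D_def)
  have P: "poly (D ((p - i) mod p)) (- x) = (-1) ^ d * poly (D i) x" if "i < p" for i x
    using pc pc' that by (simp add: D_def parity_constituents_def algebra_simps)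
  have bound: "p * d \<le> 2 * N"
  proof (cases "codim E \<le> 2 * card (pieces E)")
    case True
    have rd: "real d = 2 * real (card (pieces E)) - real (codim E)" using True by (simp add: d_def)
    have eqx: "real p * (real (card (pieces E)) - real (codim E) / 2) = real (p * d) / 2"
    proof -
      have "real p * (real (card (pieces E)) - real (codim E) / 2) = real p * (real d / 2)"
        using rd by simp
      then show ?thesis by simp
    qed
    have "real (p * d) / 2 \<le> real (nat \<lceil>real (p * d) / 2\<rceil>)"
      by linarith
    moreover have "nat \<lceil>real (p * d) / 2\<rceil> \<le> N" unfolding N_def eqx by simp
    ultimately have "real (p * d) \<le> 2 * real N" by linarith
    then show ?thesis by linarith
  next
    case False then show ?thesis by (simp add: d_def)
  qed
  show "\<forall>i<p. c' i = c i"
  proof (intro allI impI)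
    fix i assume i: "i < p"
    have "D i = 0" by (rule core[OF assms(3) i deg[OF i] Z P bound])
    then show "c' i = c i" by (simp add: D_def)
  qed
qed

end
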